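(* (a) The one-dimensional completely elliptic subspaces of $\mathbb{R}^3$ are exactly the four lines spanned by $(1,1,1)$, $(-1,1,1)$, $(1,-1,1)$, $(1,1,-1)$. (b) A two-dimensional subspace $S\subset\mathbb{R}^3$ with unit normal vector $\mathbf{w}=(w_1,w_2,w_3)$ is completely elliptic if and only if either $(w_1+w_2-w_3)(w_1-w_2+w_3)(-w_1+w_2+w_3)(w_1+w_2+w_3)>0$, or $\mathbf{w}$ is, up to sign, a unit multiple of one of the six vectors $(0,1,1)$, $(0,1,-1)$, $(1,0,1)$, $(1,0,-1)$, $(1,1,0)$, $(1,-1,0)$.
   Context: A linear subspace $S\subseteq\mathbb{R}^N$ of dimension $M$ is called completely elliptic if there exists a real $N\times M$ matrix $\mathbf{s}$ whose $M$ columns lie in $S$, whose $N$ rows are unit vectors of $\mathbb{R}^M$, and with $\operatorname{rank}\mathbf{s}=M$ (equivalently, the columns of $\mathbf{s}$ form a basis of $S$). Here $N=3$. *)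

theory Defs
  imports "HOL-Analysis.Analysis"
begin

text \<open>A real N x M matrix s is represented by the list cs of its M columns
(each a vector in R^3, so N = 3).  Row i of s is the vector
(cs!0 $ i, ..., cs!(M-1) $ i) in R^M; it is a unit vector iff the sum of
squares of its entries is 1.  The rank of s is the dimension of its column space.\<close>

definition completely_elliptic :: "(real^3) set \<Rightarrow> bool" where
  "completely_elliptic S \<longleftrightarrow> subspace S \<and>
     (\<exists>cs :: (real^3) list.
        length cs = dim S \<and>
        set cs \<subseteq> S \<and>
        (\<forall>i. (\<Sum>j<length cs. (cs ! j $ i)^2) = 1) \<and>
        dim (span (set cs)) = length cs)"

end

theory Submission
  imports Defs
begin


lemma inner3: "(w::real^3) \<bullet> x = w$1*x$1 + w$2*x$2 + w$3*x$3"
  by (simp add: inner_vec_def sum_3)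

lemma vec3_eq: "(x::real^3) = y \<longleftrightarrow> x$1=y$1 \<and> x$2=y$2 \<and> x$3=y$3"
  by (simp add: vec_eq_iff forall_3)

lemma indep2:
  fixes a b :: "real^3"
  assumes "a$i*b$j - a$j*b$i \<noteq> 0"
  shows "dim (span {a,b}) = 2"
proof -
  have b0: "b \<noteq> 0" using assms by auto
  have "a \<notin> span {b}"
  proof
    assume "a \<in> span {b}"
    then obtain k where "a = k *\<^sub>R b" by (auto simp: span_singleton)
    then show False using assms by (simp add: algebra_simps)
  qed
  then have ind: "independent {a,b}" using b0
    by (simp add: independent_insert)
  have "a \<noteq> b" using assms by auto
  then show ?thesis using ind by (simp add: dim_eq_card_independent)
qed

lemma dep2:
  fixes a b :: "real^3"
  assumes "a$1*b$2-a$2*b$1=0" "a$1*b$3-a$3*b$1=0" "a$2*b$3-a$3*b$2=0"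
  shows "dim (span {a,b}) \<le> 1"
proof -
  have "\<exists>v. {a,b} \<subseteq> span {v}"
  proof (cases "a = 0")
    case True then show ?thesis by (auto intro: span_base span_zero)
  next
    case False
    then obtain k where k: "a$k \<noteq> 0" by (auto simp: vec_eq_iff)
    have "b = (b$k / a$k) *\<^sub>R a"
      using exhaust_3[of k] k assms unfolding vec3_eq
      by (elim disjE) (auto simp: field_simps)
    then have "b \<in> span {a}" by (metis span_base span_mul insertI1 scaleR_conv_of_real)
    then show ?thesis by (auto intro: span_base)
  qed
  then obtain v where "{a,b} \<subseteq> span {v}" by blast
  then have 1: "dim {a,b} \<le> dim {v}" by (rule dim_mono)
  have 2: "dim {v} \<le> 1" by simp
  show ?thesis unfolding dim_span using 1 2 by (rule order_trans)
qed

lemma hyper: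
  fixes S :: "(real^3) set"
  assumes "subspace S" "dim S = 2" "\<forall>x\<in>S. w \<bullet> x = 0" "w \<noteq> 0"
  shows "S = {x. w \<bullet> x = 0}"
proof (rule subspace_dim_equal)
  show "subspace S" by fact
  show "subspace {x. w \<bullet> x = 0}" by (rule subspace_hyperplane)
  show "S \<subseteq> {x. w \<bullet> x = 0}" using assms(3) by blast
  have "dim {x. w \<bullet> x = 0} = DIM(real^3) - 1" by (rule dim_hyperplane[OF assms(4)])
  also have "... = 2" by simp
  finally show "dim {x. w \<bullet> x = 0} \<le> dim S" using assms(2) by simp
qed

lemma rows2: "(\<Sum>j<length [a,b]. ([a,b] ! j $ i)^2) = ((a::real^3)$i)^2 + (b$i)^2"
  by (simp add: numeral_2_eq_2)

lemma finish:
  fixes S :: "(real^3) set" and a b :: "real^3"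
  assumes "subspace S" "dim S = 2" "\<forall>x\<in>S. w \<bullet> x = 0" "w \<noteq> 0"
    "w \<bullet> a = 0" "w \<bullet> b = 0" "\<forall>i. (a$i)^2 + (b$i)^2 = 1" "dim (span {a,b}) = 2"
  shows "completely_elliptic S"
proof -
  have S: "S = {x. w \<bullet> x = 0}" using hyper assms(1-4) by blast
  have r: "\<forall>i. (\<Sum>j<length [a,b]. ([a,b] ! j $ i)^2) = 1" using assms(7) by (simp add: rows2)
  have sub: "set [a,b] \<subseteq> S" using assms(5,6) S by auto
  have l: "length [a,b] = dim S" using assms(2) by simp
  have d: "dim (span (set [a,b])) = length [a,b]" using assms(8) by simp
  show ?thesis unfolding completely_elliptic_def using assms(1) r sub l d by blast
qed


lemma key:
  fixes w1 w2 w3 a1 a2 a3 b1 b2 b3 :: real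
  assumes "w1*a1+w2*a2+w3*a3=0" "w1*b1+w2*b2+w3*b3=0"
   "a1^2+b1^2=1" "a2^2+b2^2=1" "a3^2+b3^2=1"
  shows "2*(w1^2*w2^2+w1^2*w3^2+w2^2*w3^2) - (w1^2)^2-(w2^2)^2-(w3^2)^2 = 4*(w1*w2*(a1*b2-a2*b1))^2"
proof -
  have h3: "w3^2 = (w1*a1+w2*a2)^2 + (w1*b1+w2*b2)^2"
  proof -
    have "w3^2 = w3^2*(a3^2+b3^2)" using assms by simp
    also have "... = (w3*a3)^2+(w3*b3)^2" by algebra
    also have "... = (w1*a1+w2*a2)^2 + (w1*b1+w2*b2)^2"
      using assms(1,2) by (smt (verit) power2_minus)
    finally show ?thesis .
  qed
  show ?thesis unfolding h3 using assms(3,4)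
    by algebra
qed

lemma Pform: "(w1 + w2 - w3) * (w1 - w2 + w3) * (- w1 + w2 + w3) * (w1 + w2 + w3)
     = 2*(w1^2*w2^2+w1^2*w3^2+w2^2*w3^2) - (w1^2)^2-(w2^2)^2-((w3::real)^2)^2" by algebra

lemma two_eq:
  fixes x y a b c d :: real
  assumes "x*a + y*c = 0" "x*b + y*d = 0" "a^2+b^2=1" "c^2+d^2=1"
  shows "x = y \<or> x = -y"
proof -
  have "x^2 = y^2" using assms by algebra
  then show ?thesis using power2_eq_iff by blast
qed

lemma construct:
  fixes w1 w2 w3 :: real
  assumes nz: "w1 \<noteq> 0" "w2 \<noteq> 0" "w3 \<noteq> 0"
    and P: "(w1 + w2 - w3) * (w1 - w2 + w3) * (- w1 + w2 + w3) * (w1 + w2 + w3) > 0"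
  shows "\<exists>a1 a2 a3 b1 b2 b3. w1*a1+w2*a2+w3*a3=0 \<and> w1*b1+w2*b2+w3*b3=0 \<and>
     a1^2+b1^2=1 \<and> a2^2+b2^2=1 \<and> a3^2+b3^2=1 \<and> a1*b2-a2*b1 \<noteq> 0"
proof -
  define c where "c = (w3^2 - w1^2 - w2^2) / (2*w1*w2)"
  have e: "(w1 + w2 - w3) * (w1 - w2 + w3) * (- w1 + w2 + w3) * (w1 + w2 + w3)
     = (2*w1*w2)^2 - (w3^2 - w1^2 - w2^2)^2" by algebra
  have "(w3^2 - w1^2 - w2^2)^2 < (2*w1*w2)^2" using P e by linarith
  then have "c^2 < 1" using nz unfolding c_def by (simp add: power_divide field_simps)
  define b2 where "b2 = sqrt (1 - c^2)"
  have b2pos: "b2 > 0" unfolding b2_def using \<open>c^2 < 1\<close> by simp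
  have b2sq: "b2^2 = 1 - c^2" unfolding b2_def using \<open>c^2 < 1\<close> by simp
  have cc: "2*w1*w2*c = w3^2 - w1^2 - w2^2" using nz unfolding c_def by simp
  define a3 where "a3 = -(w1 + w2*c)/w3"
  define b3 where "b3 = -(w2*b2)/w3"
  have u3: "a3^2 + b3^2 = 1"
  proof -
    have "a3^2 + b3^2 = ((w1 + w2*c)^2 + w2^2*b2^2)/w3^2"
      unfolding a3_def b3_def by (simp add: power_divide power_mult_distrib add_divide_distrib) (simp add: power2_eq_square algebra_simps)
    also have "(w1 + w2*c)^2 + w2^2*b2^2 = w1^2 + 2*w1*w2*c + w2^2"
      unfolding b2sq by algebra
    also have "... = w3^2" using cc by simp
    finally show ?thesis using nz by simp
  qed
  have e1: "w1*1 + w2*c + w3*a3 = 0" unfolding a3_def using nz by (simp add: field_simps)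
  have e2: "w1*0 + w2*b2 + w3*b3 = 0" unfolding b3_def using nz by (simp add: field_simps)
  show ?thesis
    apply (rule exI[of _ 1], rule exI[of _ c], rule exI[of _ a3])
    apply (rule exI[of _ 0], rule exI[of _ b2], rule exI[of _ b3])
    using e1 e2 u3 b2sq b2pos by auto
qed

lemma span_neg_eq: "span {- v} = span {v::real^3}"
proof
  show "span {- v} \<subseteq> span {v}"
    by (rule span_minimal) (auto intro: span_neg span_base)
  show "span {v} \<subseteq> span {- v}"
    by (rule span_minimal) (auto, metis minus_minus span_neg span_base insertI1)
qed



lemma partA:
  fixes S :: "(real^3) set"
  assumes sS: "subspace S" and d1: "dim S = 1"
  shows "completely_elliptic S \<longleftrightarrow>
               S \<in> {span {vector [1,1,1]}, span {vector [-1,1,1]},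
                     span {vector [1,-1,1]}, span {vector [1,1,-1]}}"
    (is "_ \<longleftrightarrow> S \<in> ?L")
proof
  assume "completely_elliptic S"
  then obtain cs :: "(real^3) list" where cs: "length cs = dim S" "set cs \<subseteq> S"
     "\<forall>i. (\<Sum>j<length cs. (cs ! j $ i)^2) = 1" "dim (span (set cs)) = length cs"
    unfolding completely_elliptic_def by blast
  obtain c where c: "cs = [c]" using cs(1) d1
    by (metis One_nat_def length_0_conv length_Suc_conv)
  have rc: "\<forall>i. (c$i)^2 = 1" using cs(3) c by simp
  have cS: "c \<in> S" using cs(2) c by simp
  have Seq: "span {c} = S"
  proof (rule subspace_dim_equal)
    show "subspace (span {c})" by simp
    show "subspace S" by fact
    show "span {c} \<subseteq> S" using cS sS by (simp add: span_minimal)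
    show "dim S \<le> dim (span {c})" using cs(4) c d1 by simp
  qed
  have h1: "c$1 = 1 \<or> c$1 = -1" using rc power2_eq_1_iff by blast
  have h2: "c$2 = 1 \<or> c$2 = -1" using rc power2_eq_1_iff by blast
  have h3: "c$3 = 1 \<or> c$3 = -1" using rc power2_eq_1_iff by blast
  have "c \<in> {vector [1,1,1], vector [-1,1,1], vector [1,-1,1], vector [1,1,-1]} \<or>
        -c \<in> {vector [1,1,1], vector [-1,1,1], vector [1,-1,1], vector [1,1,-1]}"
    using h1 h2 h3 by (elim disjE) (simp_all add: vec3_eq)
  then have "span {c} \<in> ?L"
  proof
    assume "c \<in> {vector [1,1,1], vector [-1,1,1], vector [1,-1,1], vector [1,1,-1]}"
    then show ?thesis by blast
  next
    assume "-c \<in> {vector [1,1,1], vector [-1,1,1], vector [1,-1,1], vector [1,1,-1]}"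
    then have "span {-c} \<in> ?L" by (elim insertE emptyE) simp_all
    then show ?thesis by (simp only: span_neg_eq)
  qed
  then show "S \<in> ?L" using Seq by simp
next
  assume "S \<in> ?L"
  then obtain v where v: "v \<in> {vector [1,1,1], vector [-1,1,1], vector [1,-1,1], vector [1,1,-1]}"
    and Sv: "S = span {v}" by blast
  have r: "\<forall>i. (v$i)^2 = (1::real)" using v unfolding forall_3 by auto
  show "completely_elliptic S" unfolding completely_elliptic_def
    apply (rule conjI[OF sS])
    apply (rule exI[of _ "[v]"])
    using r d1 Sv by (auto intro: span_base)
qed



lemma partB_fwd:
  fixes S :: "(real^3) set" and w :: "real^3"
  assumes sS: "subspace S" and d2: "dim S = 2" and orth: "\<forall>x\<in>S. w \<bullet> x = 0"
    and ce: "completely_elliptic S"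
  shows "(w$1 + w$2 - w$3) * (w$1 - w$2 + w$3) * (- w$1 + w$2 + w$3) * (w$1 + w$2 + w$3) > 0
                \<or> (\<exists>v \<in> {vector [0,1,1], vector [0,1,-1], vector [1,0,1],
                            vector [1,0,-1], vector [1,1,0], vector [1,-1,0]}.
                      \<exists>c::real. w = c *\<^sub>R v)"
proof -
  obtain cs :: "(real^3) list" where cs: "length cs = dim S" "set cs \<subseteq> S"
     "\<forall>i. (\<Sum>j<length cs. (cs ! j $ i)^2) = 1" "dim (span (set cs)) = length cs"
    using ce unfolding completely_elliptic_def by blast
  obtain a b where ab: "cs = [a,b]" using cs(1) d2
    by (metis length_0_conv length_Suc_conv numeral_2_eq_2)
  have rows: "\<forall>i. (a$i)^2 + (b$i)^2 = 1" using cs(3) ab rows2 by metis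
  have r1: "(a$1)^2 + (b$1)^2 = 1" and r2: "(a$2)^2 + (b$2)^2 = 1" and r3: "(a$3)^2 + (b$3)^2 = 1"
    using rows by auto
  have dab: "dim (span {a,b}) = 2" using cs(4) ab by simp
  have "w \<bullet> a = 0" "w \<bullet> b = 0" using cs(2) ab orth by auto
  then have ea: "w$1*a$1 + w$2*a$2 + w$3*a$3 = 0" and eb: "w$1*b$1 + w$2*b$2 + w$3*b$3 = 0"
    by (simp_all add: inner3)
  show ?thesis
  proof (cases "w$1 \<noteq> 0 \<and> w$2 \<noteq> 0 \<and> w$3 \<noteq> 0")
    case True
    note K12 = key[OF ea eb r1 r2 r3]
    have ea13: "w$1*a$1 + w$3*a$3 + w$2*a$2 = 0" and eb13: "w$1*b$1 + w$3*b$3 + w$2*b$2 = 0"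
      using ea eb by linarith+
    have ea23: "w$2*a$2 + w$3*a$3 + w$1*a$1 = 0" and eb23: "w$2*b$2 + w$3*b$3 + w$1*b$1 = 0"
      using ea eb by linarith+
    note K13 = key[OF ea13 eb13 r1 r3 r2]
    note K23 = key[OF ea23 eb23 r2 r3 r1]
    let ?P = "(w$1 + w$2 - w$3) * (w$1 - w$2 + w$3) * (- w$1 + w$2 + w$3) * (w$1 + w$2 + w$3)"
    have q1: "?P = 4*(w$1*w$2*(a$1*b$2-a$2*b$1))^2" using K12 Pform by simp
    have q2: "?P = 4*(w$1*w$3*(a$1*b$3-a$3*b$1))^2"
    proof -
      have "4*(w$1*w$3*(a$1*b$3-a$3*b$1))^2 = 2*((w$1)^2*(w$3)^2+(w$1)^2*(w$2)^2+(w$3)^2*(w$2)^2) - ((w$1)^2)^2-((w$3)^2)^2-((w$2)^2)^2"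
        using K13 by (simp add: algebra_simps)
      then show ?thesis unfolding Pform by algebra
    qed
    have q3: "?P = 4*(w$2*w$3*(a$2*b$3-a$3*b$2))^2"
    proof -
      have "4*(w$2*w$3*(a$2*b$3-a$3*b$2))^2 = 2*((w$2)^2*(w$3)^2+(w$2)^2*(w$1)^2+(w$3)^2*(w$1)^2) - ((w$2)^2)^2-((w$3)^2)^2-((w$1)^2)^2"
        using K23 by (simp add: algebra_simps)
      then show ?thesis unfolding Pform by algebra
    qed
    have "?P > 0"
    proof (rule ccontr)
      assume "\<not> ?P > 0"
      then have "?P \<le> 0" by simp
      then have "(w$1*w$2*(a$1*b$2-a$2*b$1))^2 = 0" "(w$1*w$3*(a$1*b$3-a$3*b$1))^2 = 0"
        "(w$2*w$3*(a$2*b$3-a$3*b$2))^2 = 0"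
        using q1 q2 q3 by (smt (verit) zero_le_power2)+
      then have "a$1*b$2-a$2*b$1 = 0" "a$1*b$3-a$3*b$1 = 0" "a$2*b$3-a$3*b$2 = 0"
        using True by auto
      then have "dim (span {a,b}) \<le> 1" by (rule dep2)
      then show False using dab by simp
    qed
    then show ?thesis by blast
  next
    case False
    then consider "w$1 = 0" | "w$2 = 0" | "w$3 = 0" by blast
    then have "\<exists>v \<in> {vector [0,1,1], vector [0,1,-1], vector [1,0,1],
                            vector [1,0,-1], vector [1,1,0], vector [1,-1,0]}.
                      \<exists>c::real. w = c *\<^sub>R v"
    proof cases
      case 1
      have "w$2*a$2 + w$3*a$3 = 0" "w$2*b$2 + w$3*b$3 = 0" using ea eb 1 by simp_all
      then have "w$2 = w$3 \<or> w$2 = - w$3" using r2 r3 two_eq by blast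
      then show ?thesis
      proof
        assume "w$2 = w$3" then have "w = (w$2) *\<^sub>R vector [0,1,1]" using 1 by (simp add: vec3_eq)
        then show ?thesis by blast
      next
        assume "w$2 = - w$3" then have "w = (w$2) *\<^sub>R vector [0,1,-1]" using 1 by (simp add: vec3_eq)
        then show ?thesis by blast
      qed
    next
      case 2
      have "w$1*a$1 + w$3*a$3 = 0" "w$1*b$1 + w$3*b$3 = 0" using ea eb 2 by simp_all
      then have "w$1 = w$3 \<or> w$1 = - w$3" using r1 r3 two_eq by blast
      then show ?thesis
      proof
        assume "w$1 = w$3" then have "w = (w$1) *\<^sub>R vector [1,0,1]" using 2 by (simp add: vec3_eq)
        then show ?thesis by blast
      next
        assume "w$1 = - w$3" then have "w = (w$1) *\<^sub>R vector [1,0,-1]" using 2 by (simp add: vec3_eq)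
        then show ?thesis by blast
      qed
    next
      case 3
      have "w$1*a$1 + w$2*a$2 = 0" "w$1*b$1 + w$2*b$2 = 0" using ea eb 3 by simp_all
      then have "w$1 = w$2 \<or> w$1 = - w$2" using r1 r2 two_eq by blast
      then show ?thesis
      proof
        assume "w$1 = w$2" then have "w = (w$1) *\<^sub>R vector [1,1,0]" using 3 by (simp add: vec3_eq)
        then show ?thesis by blast
      next
        assume "w$1 = - w$2" then have "w = (w$1) *\<^sub>R vector [1,-1,0]" using 3 by (simp add: vec3_eq)
        then show ?thesis by blast
      qed
    qed
    then show ?thesis by blast
  qed
qed


lemma special:
  fixes S :: "(real^3) set" and w v a b :: "real^3"
  assumes "subspace S" "dim S = 2" "\<forall>x\<in>S. w \<bullet> x = 0" "w \<noteq> 0"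
    "w = c *\<^sub>R v" "v \<bullet> a = 0" "v \<bullet> b = 0" "\<forall>i. (a$i)^2 + (b$i)^2 = 1"
    "a$i*b$j - a$j*b$i \<noteq> 0"
  shows "completely_elliptic S"
  apply (rule finish[OF assms(1-4)])
  using assms(5-9) indep2 by auto

lemma partB_bwd:
  fixes S :: "(real^3) set" and w :: "real^3"
  assumes sS: "subspace S" and d2: "dim S = 2" and orth: "\<forall>x\<in>S. w \<bullet> x = 0"
    and nw: "norm w = 1"
    and cond: "(w$1 + w$2 - w$3) * (w$1 - w$2 + w$3) * (- w$1 + w$2 + w$3) * (w$1 + w$2 + w$3) > 0
                \<or> (\<exists>v \<in> {vector [0,1,1], vector [0,1,-1], vector [1,0,1],
                            vector [1,0,-1], vector [1,1,0], vector [1,-1,0]}.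
                      \<exists>c::real. w = c *\<^sub>R v)"
  shows "completely_elliptic S"
proof -
  have w0: "w \<noteq> 0" using nw by auto
  note fin = finish[OF sS d2 orth w0]
  note sp = special[OF sS d2 orth w0]
  from cond show ?thesis
  proof
    assume P: "(w$1 + w$2 - w$3) * (w$1 - w$2 + w$3) * (- w$1 + w$2 + w$3) * (w$1 + w$2 + w$3) > 0"
    have n1: "w$1 \<noteq> 0"
    proof
      assume "w$1 = 0"
      then have "(w$1 + w$2 - w$3) * (w$1 - w$2 + w$3) * (- w$1 + w$2 + w$3) * (w$1 + w$2 + w$3)
         = 0 - ((w$2) ^ 2 - (w$3) ^ 2) ^ 2" by algebra
      then show False using P by (smt (verit) zero_le_power2)
    qed
    have n2: "w$2 \<noteq> 0"
    proof
      assume "w$2 = 0"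
      then have "(w$1 + w$2 - w$3) * (w$1 - w$2 + w$3) * (- w$1 + w$2 + w$3) * (w$1 + w$2 + w$3)
         = 0 - ((w$1) ^ 2 - (w$3) ^ 2) ^ 2" by algebra
      then show False using P by (smt (verit) zero_le_power2)
    qed
    have n3: "w$3 \<noteq> 0"
    proof
      assume "w$3 = 0"
      then have "(w$1 + w$2 - w$3) * (w$1 - w$2 + w$3) * (- w$1 + w$2 + w$3) * (w$1 + w$2 + w$3)
         = 0 - ((w$1) ^ 2 - (w$2) ^ 2) ^ 2" by algebra
      then show False using P by (smt (verit) zero_le_power2)
    qed
    obtain a1 a2 a3 b1 b2 b3 where A: "w$1*a1+w$2*a2+w$3*a3=0" "w$1*b1+w$2*b2+w$3*b3=0"
     "a1^2+b1^2=1" "a2^2+b2^2=1" "a3^2+b3^2=1" "a1*b2-a2*b1 \<noteq> 0"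
      using construct[OF n1 n2 n3 P] by blast
    let ?a = "vector [a1,a2,a3] :: real^3" and ?b = "vector [b1,b2,b3] :: real^3"
    show ?thesis
    proof (rule fin)
      show "w \<bullet> ?a = 0" "w \<bullet> ?b = 0" using A by (simp_all add: inner3)
      show "\<forall>i. (?a $ i)^2 + (?b $ i)^2 = 1" unfolding forall_3 using A by simp
      show "dim (span {?a,?b}) = 2" by (rule indep2[of _ 1 _ 2]) (use A in simp)
    qed
  next
    assume "\<exists>v \<in> {vector [0,1,1], vector [0,1,-1], vector [1,0,1],
                            vector [1,0,-1], vector [1,1,0], vector [1,-1,0]}.
                      \<exists>c::real. w = c *\<^sub>R v"
    then obtain v c where v: "v \<in> {vector [0,1,1], vector [0,1,-1], vector [1,0,1],
                            vector [1,0,-1], vector [1,1,0], vector [1,-1,0]}" and wc: "w = c *\<^sub>R v"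
      by blast
    from v show ?thesis
    proof (elim insertE emptyE)
      assume "v = vector [0,1,1]"
      then show ?thesis
        by (intro sp[OF wc, of "vector [0,1,-1]" "vector [1,0,0]" 1 2]) (simp_all add: inner3 forall_3)
    next
      assume "v = vector [0,1,-1]"
      then show ?thesis
        by (intro sp[OF wc, of "vector [0,1,1]" "vector [1,0,0]" 1 2]) (simp_all add: inner3 forall_3)
    next
      assume "v = vector [1,0,1]"
      then show ?thesis
        by (intro sp[OF wc, of "vector [1,0,-1]" "vector [0,1,0]" 1 2]) (simp_all add: inner3 forall_3)
    next
      assume "v = vector [1,0,-1]"
      then show ?thesis
        by (intro sp[OF wc, of "vector [1,0,1]" "vector [0,1,0]" 1 2]) (simp_all add: inner3 forall_3)
    next
      assume "v = vector [1,1,0]"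
      then show ?thesis
        by (intro sp[OF wc, of "vector [1,-1,0]" "vector [0,0,1]" 1 3]) (simp_all add: inner3 forall_3)
    next
      assume "v = vector [1,-1,0]"
      then show ?thesis
        by (intro sp[OF wc, of "vector [1,1,0]" "vector [0,0,1]" 1 3]) (simp_all add: inner3 forall_3)
    qed
  qed
qed

theorem mainTheorem3:
  shows "(\<forall>S :: (real^3) set. subspace S \<and> dim S = 1 \<longrightarrow>
            (completely_elliptic S \<longleftrightarrow>
               S \<in> {span {vector [1,1,1]}, span {vector [-1,1,1]},
                     span {vector [1,-1,1]}, span {vector [1,1,-1]}}))
       \<and> (\<forall>(S :: (real^3) set) (w :: real^3).
            subspace S \<and> dim S = 2 \<and> norm w = 1 \<and> (\<forall>x\<in>S. w \<bullet> x = 0) \<longrightarrow>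
            (completely_elliptic S \<longleftrightarrow>
               ((w$1 + w$2 - w$3) * (w$1 - w$2 + w$3) * (- w$1 + w$2 + w$3) * (w$1 + w$2 + w$3) > 0
                \<or> (\<exists>v \<in> {vector [0,1,1], vector [0,1,-1], vector [1,0,1],
                            vector [1,0,-1], vector [1,1,0], vector [1,-1,0]}.
                      \<exists>c::real. w = c *\<^sub>R v))))"
proof (intro conjI allI impI)
  fix S :: "(real^3) set"
  assume "subspace S \<and> dim S = 1"
  then show "completely_elliptic S \<longleftrightarrow>
               S \<in> {span {vector [1,1,1]}, span {vector [-1,1,1]},
                     span {vector [1,-1,1]}, span {vector [1,1,-1]}}"
    using partA by blast
next
  fix S :: "(real^3) set" and w :: "real^3"
  assume h: "subspace S \<and> dim S = 2 \<and> norm w = 1 \<and> (\<forall>x\<in>S. w \<bullet> x = 0)"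
  then show "completely_elliptic S \<longleftrightarrow>
               ((w$1 + w$2 - w$3) * (w$1 - w$2 + w$3) * (- w$1 + w$2 + w$3) * (w$1 + w$2 + w$3) > 0
                \<or> (\<exists>v \<in> {vector [0,1,1], vector [0,1,-1], vector [1,0,1],
                            vector [1,0,-1], vector [1,1,0], vector [1,-1,0]}.
                      \<exists>c::real. w = c *\<^sub>R v))"
    using partB_fwd[of S w] partB_bwd[of S w] by blast
qed

end
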